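(* Let $\mathcal{S}$ be an $E$-unitary inverse semigroupoid, let $\theta$ be the Munn action of $\mathcal{S}$ on $E(\mathcal{S})$, and let $\alpha$ be the induced ordered partial action of $\mathcal{S}/\sigma$ on $E(\mathcal{S})$. Then the map $\phi:\mathcal{S}\to\mathcal{S}/\sigma\ltimes_\alpha E(\mathcal{S})$, $\phi(s)=(\pi_\sigma(s),s^*s)$, is an isomorphism of semigroupoids; in particular $\mathcal{S}\cong\mathcal{S}/\sigma\ltimes_\alpha E(\mathcal{S})$.
   Context: Inverse semigroupoid: arrows $\mathcal{S}$, objects $\mathcal{S}^{(0)}$, maps $d,c$, associative multiplication on $\mathcal{S}^{(2)}=\{(s,t):d(s)=c(t)\}$ with $d(st)=d(t)$, $c(st)=c(s)$, unique $s^*$ with $ss^*s=s$, $s^*ss^*=s^*$; $E(\mathcal{S})$ = idempotents (a semilatticeoid: idempotents over the same object commute and their product is their meet), ordered by the natural order: for parallel $s,t$, $s\leqslant t$ iff $s=te$ for an idempotent $e$ with $(t,e)\in\mathcal{S}^{(2)}$. $(s,t)\in\sigma$ iff some $r\leqslant s,t$; $\mathcal{S}/\sigma$ is the groupoid of $\sigma$-classes $\pi_\sigma(s)$ with $d(\pi_\sigma(s))=d(s)$, $c(\pi_\sigma(s))=c(s)$, $\pi_\sigma(s)\pi_\sigma(t)=\pi_\sigma(st)$, $\pi_\sigma(s)^*=\pi_\sigma(s^* )$. $E$-unitary: $(s,e)\in\sigma$, $e$ idempotent imply $s$ idempotent. A morphism of semigroupoids $\varphi$ maps composable pairs to composable pairs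 with $\varphi(st)=\varphi(s)\varphi(t)$; an isomorphism is a bijective morphism whose inverse is a morphism. Munn action: $X_s=\{e\in E(\mathcal{S}):e\leqslant ss^*\}$, $\theta_s:X_{s^*}\to X_s$, $\theta_s(e)=ses^*$. Induced action of $\mathcal{S}/\sigma$: $D_{\pi_\sigma(s)}=\bigcup_{t:(s,t)\in\sigma}X_t$ and $\alpha_{\pi_\sigma(s)}:D_{\pi_\sigma(s^* )}\to D_{\pi_\sigma(s)}$, $\alpha_{\pi_\sigma(s)}(e)=\theta_t(e)$ for any $t$ with $(s,t)\in\sigma$ and $e\in X_{t^*}$. Semidirect product of a groupoid $\mathcal{G}$ acting partially by $\alpha=(\{D_g\},\{\alpha_g\})$ on a semilatticeoid $Y$: $\mathcal{G}\ltimes_\alpha Y=\{(g,y): y\in D_{g^*}\}$, objects $\mathcal{G}^{(0)}\times Y^{(0)}$, $d(g,y)=(d(g),d(y))$, $c(g,y)=(c(g),c(\alpha_g(y)))$, product $(g,x)(h,y)=(gh,\alpha_{h^*}(x\,\alpha_h(y)))$ defined when $(g,h)$ composable and $(x,\alpha_h(y))\in Y^{(2)}$ (i.e. over the same object). *)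

theory Defs
  imports Main
begin

record ('a, 'o) sgpd =
  sarr :: "'a set"
  sobj :: "'o set"
  sdom :: "'a \<Rightarrow> 'o"
  scod :: "'a \<Rightarrow> 'o"
  smul :: "'a \<Rightarrow> 'a \<Rightarrow> 'a"

definition composable :: "('a, 'o, 'b) sgpd_scheme \<Rightarrow> 'a \<Rightarrow> 'a \<Rightarrow> bool" where
  "composable S s t \<longleftrightarrow> s \<in> sarr S \<and> t \<in> sarr S \<and> sdom S s = scod S t"

definition semigroupoid :: "('a, 'o, 'b) sgpd_scheme \<Rightarrow> bool" where
  "semigroupoid S \<longleftrightarrow>
     (\<forall>s\<in>sarr S. sdom S s \<in> sobj S \<and> scod S s \<in> sobj S) \<and>
     (\<forall>s t. composable S s t \<longrightarrow>
        smul S s t \<in> sarr S \<and> sdom S (smul S s t) = sdom S t \<and> scod S (smul S s t) = scod S s) \<and>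
     (\<forall>s t u. composable S s t \<and> composable S t u \<longrightarrow>
        smul S (smul S s t) u = smul S s (smul S t u))"

definition is_inv :: "('a, 'o, 'b) sgpd_scheme \<Rightarrow> 'a \<Rightarrow> 'a \<Rightarrow> bool" where
  "is_inv S s t \<longleftrightarrow> t \<in> sarr S \<and> sdom S s = scod S t \<and> sdom S t = scod S s \<and>
     smul S (smul S s t) s = s \<and> smul S (smul S t s) t = t"

definition inverse_semigroupoid :: "('a, 'o, 'b) sgpd_scheme \<Rightarrow> bool" where
  "inverse_semigroupoid S \<longleftrightarrow> semigroupoid S \<and> (\<forall>s\<in>sarr S. \<exists>!t. is_inv S s t)"

definition star :: "('a, 'o, 'b) sgpd_scheme \<Rightarrow> 'a \<Rightarrow> 'a" where
  "star S s = (THE t. is_inv S s t)"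

definition idems :: "('a, 'o, 'b) sgpd_scheme \<Rightarrow> 'a set" where
  "idems S = {e \<in> sarr S. sdom S e = scod S e \<and> smul S e e = e}"

definition nleq :: "('a, 'o, 'b) sgpd_scheme \<Rightarrow> 'a \<Rightarrow> 'a \<Rightarrow> bool" where
  "nleq S s t \<longleftrightarrow> s \<in> sarr S \<and> t \<in> sarr S \<and> sdom S s = sdom S t \<and> scod S s = scod S t \<and>
     (\<exists>e\<in>idems S. sdom S t = scod S e \<and> s = smul S t e)"

definition sigma_rel :: "('a, 'o, 'b) sgpd_scheme \<Rightarrow> 'a \<Rightarrow> 'a \<Rightarrow> bool" where
  "sigma_rel S s t \<longleftrightarrow> (\<exists>r. nleq S r s \<and> nleq S r t)"

definition E_unitary :: "('a, 'o, 'b) sgpd_scheme \<Rightarrow> bool" where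
  "E_unitary S \<longleftrightarrow>
     (\<forall>s e. s \<in> sarr S \<and> e \<in> idems S \<and> sigma_rel S s e \<longrightarrow> s \<in> idems S)"

definition pi_sigma :: "('a, 'o, 'b) sgpd_scheme \<Rightarrow> 'a \<Rightarrow> 'a set" where
  "pi_sigma S s = {t \<in> sarr S. sigma_rel S s t}"

definition rep :: "'a set \<Rightarrow> 'a" where
  "rep g = (SOME s. s \<in> g)"

definition sigma_quot :: "('a, 'o, 'b) sgpd_scheme \<Rightarrow> ('a set, 'o) sgpd" where
  "sigma_quot S =
     \<lparr> sarr = pi_sigma S ` sarr S,
       sobj = sobj S,
       sdom = (\<lambda>g. sdom S (rep g)),
       scod = (\<lambda>g. scod S (rep g)),
       smul = (\<lambda>g h. pi_sigma S (smul S (rep g) (rep h))) \<rparr>"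

definition idem_sgpd :: "('a, 'o, 'b) sgpd_scheme \<Rightarrow> ('a, 'o) sgpd" where
  "idem_sgpd S = \<lparr> sarr = idems S, sobj = sobj S, sdom = sdom S, scod = scod S, smul = smul S \<rparr>"

definition munn_X :: "('a, 'o, 'b) sgpd_scheme \<Rightarrow> 'a \<Rightarrow> 'a set" where
  "munn_X S s = {e \<in> idems S. nleq S e (smul S s (star S s))}"

definition munn_theta :: "('a, 'o, 'b) sgpd_scheme \<Rightarrow> 'a \<Rightarrow> 'a \<Rightarrow> 'a" where
  "munn_theta S s e = smul S (smul S s e) (star S s)"

definition ind_D :: "('a, 'o, 'b) sgpd_scheme \<Rightarrow> 'a set \<Rightarrow> 'a set" where
  "ind_D S g = (\<Union>t\<in>g. munn_X S t)"

definition ind_alpha :: "('a, 'o, 'b) sgpd_scheme \<Rightarrow> 'a set \<Rightarrow> 'a \<Rightarrow> 'a" where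
  "ind_alpha S g e = munn_theta S (SOME t. t \<in> g \<and> e \<in> munn_X S (star S t)) e"

definition semidirect ::
  "('g, 'o, 'b) sgpd_scheme \<Rightarrow> ('y, 'p, 'c) sgpd_scheme \<Rightarrow> ('g \<Rightarrow> 'y set) \<Rightarrow> ('g \<Rightarrow> 'y \<Rightarrow> 'y)
     \<Rightarrow> ('g \<times> 'y, 'o \<times> 'p) sgpd" where
  "semidirect G Y D \<alpha> =
     \<lparr> sarr = {(g, y). g \<in> sarr G \<and> y \<in> D (star G g)},
       sobj = sobj G \<times> sobj Y,
       sdom = (\<lambda>(g, y). (sdom G g, sdom Y y)),
       scod = (\<lambda>(g, y). (scod G g, scod Y (\<alpha> g y))),
       smul = (\<lambda>(g, x) (h, y). (smul G g h, \<alpha> (star G h) (smul Y x (\<alpha> h y)))) \<rparr>"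

definition sgpd_morphism ::
  "('a, 'o, 'b) sgpd_scheme \<Rightarrow> ('c, 'p, 'd) sgpd_scheme \<Rightarrow> ('a \<Rightarrow> 'c) \<Rightarrow> bool" where
  "sgpd_morphism S T f \<longleftrightarrow> (\<forall>s\<in>sarr S. f s \<in> sarr T) \<and>
     (\<forall>s t. composable S s t \<longrightarrow>
        composable T (f s) (f t) \<and> f (smul S s t) = smul T (f s) (f t))"

definition sgpd_iso ::
  "('a, 'o, 'b) sgpd_scheme \<Rightarrow> ('c, 'p, 'd) sgpd_scheme \<Rightarrow> ('a \<Rightarrow> 'c) \<Rightarrow> bool" where
  "sgpd_iso S T f \<longleftrightarrow> sgpd_morphism S T f \<and> bij_betw f (sarr S) (sarr T) \<and>
     sgpd_morphism T S (the_inv_into (sarr S) f)"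

end

theory Submission
  imports Defs
begin
locale ES =
  fixes S :: "('a,'o) sgpd"
  assumes inv: "inverse_semigroupoid S" and EU: "E_unitary S"
begin

abbreviation "A \<equiv> sarr S"
abbreviation "dm \<equiv> sdom S"
abbreviation "cd \<equiv> scod S"
abbreviation mul (infixr "\<cdot>" 70) where "x \<cdot> y \<equiv> smul S x y"
abbreviation "iv \<equiv> star S"
abbreviation "E \<equiv> idems S"

lemma sg: "semigroupoid S" using inv unfolding inverse_semigroupoid_def by simp

lemma closed[simp]: "x\<in>A \<Longrightarrow> y\<in>A \<Longrightarrow> dm x = cd y \<Longrightarrow> x\<cdot>y \<in> A"
  using sg unfolding semigroupoid_def composable_def by blast
lemma dm_mul[simp]: "x\<in>A \<Longrightarrow> y\<in>A \<Longrightarrow> dm x = cd y \<Longrightarrow> dm (x\<cdot>y) = dm y"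
  using sg unfolding semigroupoid_def composable_def by blast
lemma cd_mul[simp]: "x\<in>A \<Longrightarrow> y\<in>A \<Longrightarrow> dm x = cd y \<Longrightarrow> cd (x\<cdot>y) = cd x"
  using sg unfolding semigroupoid_def composable_def by blast
lemma assoc[simp]: "x\<in>A \<Longrightarrow> y\<in>A \<Longrightarrow> z\<in>A \<Longrightarrow> dm x = cd y \<Longrightarrow> dm y = cd z \<Longrightarrow> (x\<cdot>y)\<cdot>z = x\<cdot>y\<cdot>z"
  using sg unfolding semigroupoid_def composable_def by blast

lemma star_is_inv: "s\<in>A \<Longrightarrow> is_inv S s (iv s)"
  using inv unfolding inverse_semigroupoid_def star_def by (metis theI')

lemma inv_unique: "s\<in>A \<Longrightarrow> is_inv S s t \<Longrightarrow> t = iv s"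
  using inv unfolding inverse_semigroupoid_def star_def by (metis the1_equality)

lemma iv_props[simp]:
  assumes "s\<in>A"
  shows "iv s \<in> A" "dm (iv s) = cd s" "cd (iv s) = dm s" "s\<cdot>iv s\<cdot>s = s" "iv s\<cdot>s\<cdot>iv s = iv s"
  using star_is_inv[OF assms] assms unfolding is_inv_def by auto

lemma inv_eqI:
  assumes "s\<in>A" "t\<in>A" "dm s = cd t" "dm t = cd s" "s\<cdot>t\<cdot>s = s" "t\<cdot>s\<cdot>t = t"
  shows "t = iv s"
  using inv_unique[of s t] assms unfolding is_inv_def by auto

lemma iv_iv[simp]: "s\<in>A \<Longrightarrow> iv (iv s) = s"
  by (metis inv_eqI iv_props)

lemma iv_laws2[simp]:
  assumes "s\<in>A" "x\<in>A" "cd x = dm s"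
  shows "s\<cdot>iv s\<cdot>s\<cdot>x = s\<cdot>x"
proof -
  have "(s\<cdot>iv s\<cdot>s)\<cdot>x = s\<cdot>x" using assms by simp
  thus ?thesis using assms by (simp del: iv_props(4) add: iv_props(1-3))
qed

lemma iv_laws3[simp]:
  assumes "s\<in>A" "x\<in>A" "cd x = cd s"
  shows "iv s\<cdot>s\<cdot>iv s\<cdot>x = iv s\<cdot>x"
  using iv_laws2[of "iv s" x] assms by simp

lemma idemD: "e\<in>E \<Longrightarrow> e\<in>A \<and> dm e = cd e \<and> e\<cdot>e = e" by (simp add: idems_def)
lemma idemI: "e\<in>A \<Longrightarrow> dm e = cd e \<Longrightarrow> e\<cdot>e = e \<Longrightarrow> e\<in>E" by (simp add: idems_def)

lemma idem_idem[simp]: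
  assumes "e\<in>E" "x\<in>A" "cd x = dm e" shows "e\<cdot>e\<cdot>x = e\<cdot>x"
proof -
  have h: "e\<in>A" "dm e = cd e" "e\<cdot>e = e" using idemD[OF assms(1)] by auto
  have "e\<cdot>e\<cdot>x = (e\<cdot>e)\<cdot>x" using h(1,2) assms by simp
  also have "\<dots> = e\<cdot>x" using h by simp
  finally show ?thesis .
qed

lemma iv_idem[simp]: "e\<in>E \<Longrightarrow> iv e = e"
  using inv_eqI[of e e] idemD[of e] by auto

lemma idem_A: "e\<in>E \<Longrightarrow> e\<in>A" and idem_dc: "e\<in>E \<Longrightarrow> cd e = dm e"
  using idemD by auto

lemma idem_mul:
  assumes e: "e\<in>E" and f: "f\<in>E" and def: "dm e = dm f"
  shows "e\<cdot>f \<in> E"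
proof -
  have eA: "e\<in>A" "cd e = dm e" "e\<cdot>e = e" using idemD[OF e] by auto
  have fA: "f\<in>A" "cd f = dm f" "f\<cdot>f = f" using idemD[OF f] by auto
  note ba = eA fA def e f
  define x where "x = iv (e\<cdot>f)"
  have x: "x\<in>A" "dm x = dm e" "cd x = dm e" using ba by (auto simp: x_def)
  have efA: "e\<cdot>f \<in> A" using ba by simp
  have l1: "e\<cdot>f\<cdot>x\<cdot>e\<cdot>f = e\<cdot>f" using iv_props(4)[OF efA] ba unfolding x_def
    by (simp del: iv_props(4))
  have l2: "x\<cdot>e\<cdot>f\<cdot>x = x" using iv_props(5)[OF efA] ba unfolding x_def by (simp del: iv_props(5))
  have l2': "x\<cdot>e\<cdot>f\<cdot>x\<cdot>e = x\<cdot>e" using arg_cong[where f="\<lambda>t. t\<cdot>e", OF l2] ba x by simp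
  have hx: "f\<cdot>x\<cdot>e = x" unfolding x_def
    apply (rule inv_eqI) using ba x l1 l2' by (simp_all add: x_def)
  have "x\<cdot>x = (f\<cdot>x\<cdot>e)\<cdot>(f\<cdot>x\<cdot>e)" using hx by simp
  also have "\<dots> = f\<cdot>x\<cdot>e" using l2' ba x by simp
  also have "\<dots> = x" by (rule hx)
  finally have "x \<in> E" using x ba by (intro idemI) auto
  hence "iv x = x" by simp
  moreover have "iv x = e\<cdot>f" using ba by (simp add: x_def)
  ultimately show ?thesis using \<open>x\<in>E\<close> by simp
qed

lemma idem_comm:
  assumes e: "e\<in>E" and f: "f\<in>E" and def: "dm e = dm f"
  shows "e\<cdot>f = f\<cdot>e"
proof -
  have eA: "e\<in>A" "cd e = dm e" "e\<cdot>e = e" using idemD[OF e] by auto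
  have fA: "f\<in>A" "cd f = dm f" "f\<cdot>f = f" using idemD[OF f] by auto
  note ba = eA fA def e f
  have fe: "f\<cdot>e \<in> E" "e\<cdot>f \<in> E" using idem_mul assms by auto
  have fe2: "f\<cdot>e\<cdot>f\<cdot>e = f\<cdot>e" using idemD[OF fe(1)] ba by simp
  have ef2: "e\<cdot>f\<cdot>e\<cdot>f = e\<cdot>f" using idemD[OF fe(2)] ba by simp
  have "e\<cdot>f = iv (f\<cdot>e)" apply (rule inv_eqI) using ba fe2 ef2 by simp_all
  thus ?thesis using fe by simp
qed

lemma idem_comm3:
  assumes e: "e\<in>E" and f: "f\<in>E" and def: "dm e = dm f" and x: "x\<in>A" "cd x = dm e"
  shows "e\<cdot>f\<cdot>x = f\<cdot>e\<cdot>x"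
  using arg_cong[where f="\<lambda>t. t\<cdot>x", OF idem_comm[OF e f def]] idemD[OF e] idemD[OF f] def x
  by simp


end

context ES begin
lemma ssi_idem: "s\<in>A \<Longrightarrow> s\<cdot>iv s \<in> E"
  by (rule idemI) auto
lemma sis_idem: "s\<in>A \<Longrightarrow> iv s\<cdot>s \<in> E"
  by (rule idemI) auto

lemma iv_mul[simp]:
  assumes "s\<in>A" "t\<in>A" "dm s = cd t"
  shows "iv (s\<cdot>t) = iv t\<cdot>iv s"
proof -
  have c: "t\<cdot>iv t\<cdot>iv s\<cdot>s\<cdot>x = iv s\<cdot>s\<cdot>t\<cdot>iv t\<cdot>x" if "x\<in>A" "cd x = cd t" for x
    using idem_comm3[of "t\<cdot>iv t" "iv s\<cdot>s" x] ssi_idem[of t] sis_idem[of s] assms that by simp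
  have c2: "iv s\<cdot>s\<cdot>t\<cdot>iv t\<cdot>x = t\<cdot>iv t\<cdot>iv s\<cdot>s\<cdot>x" if "x\<in>A" "cd x = cd t" for x
    using c that by simp
  show ?thesis
    apply (rule sym, rule inv_eqI) using assms apply simp_all
    using c assms apply simp
    using c2 assms apply simp
    done
qed
lemma idem_conj1:
  assumes e: "e\<in>E" and a: "a\<in>A" "dm e = cd a"
  shows "a\<cdot>iv a\<cdot>e\<cdot>a = e\<cdot>a"
proof -
  have e': "e\<in>A" "cd e = cd a" using idemD[OF e] a by auto
  have h: "(a\<cdot>iv a)\<cdot>e\<cdot>a = e\<cdot>(a\<cdot>iv a)\<cdot>a"
    by (rule idem_comm3[of "a\<cdot>iv a" e a]) (simp_all add: ssi_idem e e' a)
  have h2: "(a\<cdot>iv a)\<cdot>e\<cdot>a = a\<cdot>iv a\<cdot>e\<cdot>a" using e' a by simp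
  have h3: "e\<cdot>(a\<cdot>iv a)\<cdot>a = e\<cdot>a" using e' a by simp
  show ?thesis using h h2 h3 by simp
qed

lemma idem_conj2:
  assumes e: "e\<in>E" and a: "a\<in>A" "dm e = cd a"
  shows "iv a\<cdot>e\<cdot>a \<in> E"
proof -
  have e': "e\<in>A" "cd e = cd a" using idemD[OF e] a by auto
  have 1: "a\<cdot>iv a\<cdot>e\<cdot>a = e\<cdot>a" by (rule idem_conj1[OF e a])
  have "(iv a\<cdot>e\<cdot>a)\<cdot>(iv a\<cdot>e\<cdot>a) = iv a\<cdot>e\<cdot>a\<cdot>iv a\<cdot>e\<cdot>a" using e' a by simp
  also have "\<dots> = iv a\<cdot>e\<cdot>e\<cdot>a" using 1 by simp
  also have "\<dots> = iv a\<cdot>e\<cdot>a" using e e' a by simp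
  finally show ?thesis using e' a by (intro idemI) auto
qed

lemma le_mulI: "s\<in>A \<Longrightarrow> e\<in>E \<Longrightarrow> dm s = cd e \<Longrightarrow> nleq S (s\<cdot>e) s"
  unfolding nleq_def using idemD[of e] by auto

lemma le_E: "nleq S r s \<Longrightarrow> r\<in>A \<and> s\<in>A \<and> dm r = dm s \<and> cd r = cd s \<and> (\<exists>e\<in>E. dm s = cd e \<and> r = s\<cdot>e)"
  unfolding nleq_def by auto

lemma le_refl: assumes "s\<in>A" shows "nleq S s s"
proof -
  have "nleq S (s\<cdot>(iv s\<cdot>s)) s" by (rule le_mulI[OF assms sis_idem[OF assms]]) (simp add: assms)
  thus ?thesis using assms by simp
qed

lemma le_left: assumes e: "e\<in>E" and a: "a\<in>A" "dm e = cd a" shows "nleq S (e\<cdot>a) a"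
proof -
  have e': "e\<in>A" "cd e = cd a" using idemD[OF e] a by auto
  have "nleq S (a\<cdot>(iv a\<cdot>e\<cdot>a)) a" by (rule le_mulI[OF a(1) idem_conj2[OF e a]]) (simp add: a e')
  thus ?thesis using idem_conj1[OF e a] a e' by simp
qed

lemma le_trans: assumes "nleq S r s" "nleq S s t" shows "nleq S r t"
proof -
  obtain e where e: "e\<in>E" "dm s = cd e" "r = s\<cdot>e" using le_E[OF assms(1)] by auto
  obtain f where f: "f\<in>E" "dm t = cd f" "s = t\<cdot>f" using le_E[OF assms(2)] by auto
  have A: "r\<in>A" "s\<in>A" "t\<in>A" "dm s = dm t" using le_E assms by auto
  have ie: "e\<in>A" "dm e = cd e" using idemD[OF e(1)] by auto
  have i_f: "f\<in>A" "dm f = cd f" using idemD[OF f(1)] by auto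
  have r: "r = t\<cdot>(f\<cdot>e)" using e f A ie i_f by simp
  have fe: "f\<cdot>e\<in>E" by (rule idem_mul[OF f(1) e(1)]) (use e f A ie i_f in simp)
  have "nleq S (t\<cdot>(f\<cdot>e)) t" by (rule le_mulI[OF A(3) fe]) (use e f A ie i_f in simp)
  thus ?thesis using r by simp
qed

lemma le_mulR: assumes "nleq S r s" "u\<in>A" "dm s = cd u" shows "nleq S (r\<cdot>u) (s\<cdot>u)"
proof -
  obtain e where e: "e\<in>E" "dm s = cd e" "r = s\<cdot>e" using le_E[OF assms(1)] by auto
  have A: "r\<in>A" "s\<in>A" using le_E assms by auto
  have e': "e\<in>A" "cd e = dm e" using idemD[OF e(1)] by auto
  have eu: "dm e = cd u" using e e' assms by simp
  have "r\<cdot>u = s\<cdot>e\<cdot>u" using e e' A assms by simp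
  also have "\<dots> = s\<cdot>u\<cdot>iv u\<cdot>e\<cdot>u" using idem_conj1[OF e(1) assms(2) eu] by simp
  finally have 1: "r\<cdot>u = (s\<cdot>u)\<cdot>(iv u\<cdot>e\<cdot>u)" using e e' A assms by simp
  have "nleq S ((s\<cdot>u)\<cdot>(iv u\<cdot>e\<cdot>u)) (s\<cdot>u)"
    by (rule le_mulI[OF _ idem_conj2[OF e(1) assms(2) eu]]) (use e e' A assms in simp_all)
  thus ?thesis using 1 by simp
qed

lemma le_mulL: assumes "nleq S r s" "u\<in>A" "dm u = cd s" shows "nleq S (u\<cdot>r) (u\<cdot>s)"
proof -
  obtain e where e: "e\<in>E" "dm s = cd e" "r = s\<cdot>e" using le_E[OF assms(1)] by auto
  have A: "r\<in>A" "s\<in>A" using le_E assms by auto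
  have e': "e\<in>A" "cd e = dm e" using idemD[OF e(1)] by auto
  have 1: "u\<cdot>r = (u\<cdot>s)\<cdot>e" using e e' A assms by simp
  have "nleq S ((u\<cdot>s)\<cdot>e) (u\<cdot>s)" by (rule le_mulI[OF _ e(1)]) (use e e' A assms in simp_all)
  thus ?thesis using 1 by simp
qed

lemma le_iv: assumes "nleq S r s" shows "nleq S (iv r) (iv s)"
proof -
  obtain e where e: "e\<in>E" "dm s = cd e" "r = s\<cdot>e" using le_E[OF assms(1)] by auto
  have A: "r\<in>A" "s\<in>A" using le_E assms by auto
  have e': "e\<in>A" "cd e = dm e" using idemD[OF e(1)] by auto
  have 1: "iv r = e\<cdot>iv s" using e e' A iv_idem[OF e(1)] by simp
  have "nleq S (e\<cdot>iv s) (iv s)" by (rule le_left[OF e(1)]) (use e e' A in simp_all)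
  thus ?thesis using 1 by simp
qed

abbreviation "sg_rel \<equiv> sigma_rel S"

lemma sig_refl: "s\<in>A \<Longrightarrow> sg_rel s s" unfolding sigma_rel_def using le_refl by blast
lemma sig_sym: "sg_rel s t \<Longrightarrow> sg_rel t s" unfolding sigma_rel_def by blast
lemma sig_par: "sg_rel s t \<Longrightarrow> s\<in>A \<and> t\<in>A \<and> dm s = dm t \<and> cd s = cd t"
  unfolding sigma_rel_def nleq_def by auto
lemma sig_trans: assumes "sg_rel s t" "sg_rel t u" shows "sg_rel s u"
proof -
  obtain r1 where r1: "nleq S r1 s" "nleq S r1 t" using assms(1) unfolding sigma_rel_def by blast
  obtain r2 where r2: "nleq S r2 t" "nleq S r2 u" using assms(2) unfolding sigma_rel_def by blast
  obtain e1 where e1: "e1\<in>E" "dm t = cd e1" "r1 = t\<cdot>e1" using le_E[OF r1(2)] by auto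
  obtain e2 where e2: "e2\<in>E" "dm t = cd e2" "r2 = t\<cdot>e2" using le_E[OF r2(1)] by auto
  have A: "t\<in>A" "r1\<in>A" "r2 \<in> A" "dm r1 = dm t" "dm r2 = dm t" using le_E[OF r1(2)] le_E[OF r2(1)] by auto
  have i1: "e1\<in>A" "dm e1 = cd e1" using idemD[OF e1(1)] by auto
  have i2: "e2\<in>A" "dm e2 = cd e2" using idemD[OF e2(1)] by auto
  have a: "nleq S (r1\<cdot>e2) r1" by (rule le_mulI[OF _ e2(1)]) (use e1 e2 A i1 i2 in simp_all)
  have b: "nleq S (r2\<cdot>e1) r2" by (rule le_mulI[OF _ e1(1)]) (use e1 e2 A i1 i2 in simp_all)
  have c: "e1\<cdot>e2 = e2\<cdot>e1" by (rule idem_comm[OF e1(1) e2(1)]) (use e1 e2 i1 i2 in simp)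
  have "r1\<cdot>e2 = t\<cdot>(e1\<cdot>e2)" using e1 e2 A i1 i2 by simp
  also have "\<dots> = t\<cdot>(e2\<cdot>e1)" using c by simp
  also have "\<dots> = r2\<cdot>e1" using e1 e2 A i1 i2 by simp
  finally have "r1\<cdot>e2 = r2\<cdot>e1" .
  hence "nleq S (r1\<cdot>e2) s \<and> nleq S (r1\<cdot>e2) u" using a b r1 r2 le_trans by metis
  thus ?thesis unfolding sigma_rel_def by blast
qed

lemma sig_mulR: assumes "sg_rel s t" "u\<in>A" "dm s = cd u" shows "sg_rel (s\<cdot>u) (t\<cdot>u)"
proof -
  obtain r where r: "nleq S r s" "nleq S r t" using assms(1) unfolding sigma_rel_def by blast
  have "dm t = cd u" using sig_par[OF assms(1)] assms by simp
  thus ?thesis using le_mulR[OF r(1) assms(2,3)] le_mulR[OF r(2) assms(2)] unfolding sigma_rel_def by blast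
qed
lemma sig_mulL: assumes "sg_rel s t" "u\<in>A" "dm u = cd s" shows "sg_rel (u\<cdot>s) (u\<cdot>t)"
proof -
  obtain r where r: "nleq S r s" "nleq S r t" using assms(1) unfolding sigma_rel_def by blast
  have "dm u = cd t" using sig_par[OF assms(1)] assms by simp
  thus ?thesis using le_mulL[OF r(1) assms(2,3)] le_mulL[OF r(2) assms(2)] unfolding sigma_rel_def by blast
qed
lemma sig_iv: "sg_rel s t \<Longrightarrow> sg_rel (iv s) (iv t)"
  unfolding sigma_rel_def using le_iv by metis
lemma sig_le: "nleq S r s \<Longrightarrow> sg_rel r s"
  unfolding sigma_rel_def using le_refl le_E by metis

lemma sig_idem: assumes "sg_rel s t" shows "s\<cdot>iv t \<in> E"
proof -
  have p: "s\<in>A" "t\<in>A" "dm s = dm t" "cd s = cd t" using sig_par[OF assms] by auto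
  have "sg_rel (s\<cdot>iv t) (t\<cdot>iv t)" using sig_mulR[OF assms, of "iv t"] p by simp
  moreover have "s\<cdot>iv t \<in> A" using p by simp
  ultimately show ?thesis using EU ssi_idem[OF p(2)] unfolding E_unitary_def by blast
qed

lemma sig_inj: assumes "sg_rel s t" "iv s\<cdot>s = iv t\<cdot>t" shows "s = t"
proof -
  have p: "s\<in>A" "t\<in>A" "dm s = dm t" "cd s = cd t" using sig_par[OF assms(1)] by auto
  define f where "f = s\<cdot>iv t"
  have f: "f\<in>E" using sig_idem[OF assms(1)] by (simp add: f_def)
  have fA: "f\<in>A" "dm f = cd t" "cd f = cd t" using p by (auto simp: f_def)
  have "s\<cdot>iv t\<cdot>t = s\<cdot>iv s\<cdot>s" using arg_cong[where f="\<lambda>x. s\<cdot>x", OF assms(2)] p by simp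
  hence s1: "s = f\<cdot>t" using p by (simp add: f_def)
  have ivs: "iv s = iv t\<cdot>f" using s1 fA iv_idem[OF f] p by simp
  have "t\<cdot>iv s\<cdot>s = t" using assms(2) p by simp
  hence "t = t\<cdot>iv s\<cdot>s" by simp
  also have "\<dots> = t\<cdot>iv t\<cdot>f\<cdot>f\<cdot>t" using ivs s1 fA p by simp
  also have "\<dots> = t\<cdot>iv t\<cdot>f\<cdot>t" using f fA p by simp
  also have "\<dots> = f\<cdot>t\<cdot>iv t\<cdot>t"
  proof -
    have "(t\<cdot>iv t)\<cdot>f\<cdot>t = f\<cdot>(t\<cdot>iv t)\<cdot>t"
      by (rule idem_comm3[OF ssi_idem[OF p(2)] f]) (use fA p in simp_all)
    thus ?thesis using fA p by simp
  qed
  also have "\<dots> = s" using s1 fA p by simp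
  finally show ?thesis by simp
qed
end

context ES begin

abbreviation "P \<equiv> pi_sigma S"
abbreviation "G \<equiv> sigma_quot S"

lemma pi_mem: "s\<in>A \<Longrightarrow> s \<in> P s" unfolding pi_sigma_def using sig_refl by auto

lemma pi_eq_iff: assumes "s\<in>A" "t\<in>A" shows "P s = P t \<longleftrightarrow> sg_rel s t"
proof
  assume "P s = P t" thus "sg_rel s t" using pi_mem[OF assms(2)] unfolding pi_sigma_def by auto
next
  assume h: "sg_rel s t"
  show "P s = P t" unfolding pi_sigma_def using h sig_trans sig_sym by blast
qed

lemma pi_memD: "x \<in> P s \<Longrightarrow> x\<in>A \<and> sg_rel s x" unfolding pi_sigma_def by auto

lemma rep_P: assumes "s\<in>A" shows "rep (P s) \<in> A" "sg_rel s (rep (P s))"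
proof -
  have "rep (P s) \<in> P s" unfolding rep_def using pi_mem[OF assms] by (metis someI)
  thus "rep (P s) \<in> A" "sg_rel s (rep (P s))" using pi_memD by auto
qed

lemma G_sarr: "sarr G = P ` A" by (simp add: sigma_quot_def)
lemma G_dom: "s\<in>A \<Longrightarrow> sdom G (P s) = dm s"
  using rep_P sig_par by (simp add: sigma_quot_def) metis
lemma G_cod: "s\<in>A \<Longrightarrow> scod G (P s) = cd s"
  using rep_P sig_par by (simp add: sigma_quot_def) metis

lemma G_mul: assumes "s\<in>A" "t\<in>A" "dm s = cd t" shows "smul G (P s) (P t) = P (s\<cdot>t)"
proof -
  let ?s = "rep (P s)" and ?t = "rep (P t)"
  have rs: "?s\<in>A" "sg_rel s ?s" and rt: "?t\<in>A" "sg_rel t ?t" using rep_P assms by auto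
  have ps: "dm ?s = dm s" "cd ?t = cd t" using sig_par[OF rs(2)] sig_par[OF rt(2)] by auto
  have "sg_rel (s\<cdot>t) (?s\<cdot>t)" by (rule sig_mulR[OF rs(2) assms(2,3)])
  moreover have "sg_rel (?s\<cdot>t) (?s\<cdot>?t)" by (rule sig_mulL[OF rt(2) rs(1)]) (use ps assms in simp)
  ultimately have "sg_rel (s\<cdot>t) (?s\<cdot>?t)" by (rule sig_trans)
  moreover have "?s\<cdot>?t \<in> A" using rs rt ps assms by simp
  ultimately have "P (?s\<cdot>?t) = P (s\<cdot>t)" using pi_eq_iff assms by (metis closed)
  thus ?thesis by (simp add: sigma_quot_def)
qed

lemma G_star: assumes s: "s\<in>A" shows "star G (P s) = P (iv s)"
  unfolding star_def[of G]
proof (rule the_equality)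
  show "is_inv G (P s) (P (iv s))" unfolding is_inv_def
    using s by (simp add: G_sarr G_dom G_cod G_mul)
next
  fix h assume h: "is_inv G (P s) h"
  then obtain t where t: "t\<in>A" "h = P t" unfolding is_inv_def G_sarr by auto
  have dc: "dm s = cd t" "dm t = cd s" using h s t unfolding is_inv_def by (auto simp: G_dom G_cod)
  have "smul G (smul G (P s) (P t)) (P s) = P s" using h t unfolding is_inv_def by simp
  hence "P (s\<cdot>t\<cdot>s) = P s" using s t dc by (simp add: G_mul)
  hence r: "sg_rel (s\<cdot>t\<cdot>s) s" using s t dc pi_eq_iff by (metis closed dm_mul cd_mul)
  have "sg_rel (iv s\<cdot>(s\<cdot>t\<cdot>s)) (iv s\<cdot>s)" by (rule sig_mulL[OF r]) (use s t dc in simp_all)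
  hence "sg_rel ((iv s\<cdot>(s\<cdot>t\<cdot>s))\<cdot>iv s) ((iv s\<cdot>s)\<cdot>iv s)" by (rule sig_mulR) (use s t dc in simp_all)
  hence r2: "sg_rel (iv s\<cdot>s\<cdot>t\<cdot>s\<cdot>iv s) (iv s)" using s t dc by simp
  have l1: "nleq S ((iv s\<cdot>s)\<cdot>(t\<cdot>s\<cdot>iv s)) (t\<cdot>s\<cdot>iv s)"
    by (rule le_left[OF sis_idem[OF s]]) (use s t dc in simp_all)
  have l2: "nleq S (t\<cdot>(s\<cdot>iv s)) t"
    by (rule le_mulI[OF t(1) ssi_idem[OF s]]) (use s t dc in simp_all)
  have "nleq S (iv s\<cdot>s\<cdot>t\<cdot>s\<cdot>iv s) t" using le_trans[OF l1 l2] s t dc by simp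
  hence "sg_rel t (iv s)" using r2 sig_le sig_sym sig_trans by metis
  thus "h = P (iv s)" using t s pi_eq_iff by simp
qed

lemma le_idem_iff: assumes e: "e\<in>E" and f: "f\<in>E" and d: "dm e = dm f"
  shows "nleq S e f \<longleftrightarrow> e\<cdot>f = e"
proof
  assume "nleq S e f"
  then obtain g where g: "g\<in>E" "dm f = cd g" "e = f\<cdot>g" using le_E by blast
  have ig: "g\<in>A" "dm g = cd g" using idemD[OF g(1)] by auto
  have i_f: "f\<in>A" "dm f = cd f" "f\<cdot>f = f" using idemD[OF f] by auto
  have c: "g\<cdot>f = f\<cdot>g" by (rule idem_comm[OF g(1) f]) (use g ig i_f in simp)
  have "e\<cdot>f = f\<cdot>(g\<cdot>f)" using g ig i_f by simp
  also have "\<dots> = f\<cdot>f\<cdot>g" using c by simp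
  also have "\<dots> = f\<cdot>g" using idem_idem[OF f] g ig i_f by simp
  finally show "e\<cdot>f = e" using g by simp
next
  assume h: "e\<cdot>f = e"
  have ie: "e\<in>A" "dm e = cd e" using idemD[OF e] by auto
  have i_f: "f\<in>A" "dm f = cd f" using idemD[OF f] by auto
  have "nleq S (f\<cdot>e) f" by (rule le_mulI[OF i_f(1) e]) (use ie i_f d in simp)
  moreover have "f\<cdot>e = e\<cdot>f" by (rule idem_comm[OF f e]) (use d in simp)
  ultimately show "nleq S e f" using h by simp
qed

lemma munn_X_iff: "y \<in> munn_X S v \<longleftrightarrow> y\<in>E \<and> nleq S y (v\<cdot>iv v)"
  unfolding munn_X_def by simp

lemma alpha: assumes u: "u\<in>A" and y: "y\<in>E" "dm y = dm u" and yu: "y\<cdot>iv u\<cdot>u = y"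
  shows "ind_alpha S (P u) y = u\<cdot>y\<cdot>iv u"
proof -
  have iy: "y\<in>A" "cd y = dm u" "y\<cdot>y = y" using idemD[OF y(1)] y by auto
  define w where "w = (SOME w. w \<in> P u \<and> y \<in> munn_X S (iv w))"
  have ex: "u \<in> P u \<and> y \<in> munn_X S (iv u)"
  proof -
    have "nleq S y (iv u\<cdot>u)" using le_idem_iff[OF y(1) sis_idem[OF u]] y yu u by simp
    thus ?thesis using pi_mem[OF u] y u by (simp add: munn_X_iff)
  qed
  have wP: "w \<in> P u \<and> y \<in> munn_X S (iv w)" unfolding w_def by (rule someI, rule ex)
  hence w: "w\<in>A" "sg_rel u w" using pi_memD by auto
  have pw: "dm w = dm u" "cd w = cd u" using sig_par[OF w(2)] by auto
  have "nleq S y (iv w\<cdot>w)" using wP w by (simp add: munn_X_iff)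
  hence yw: "y\<cdot>iv w\<cdot>w = y" using le_idem_iff[OF y(1) sis_idem[OF w(1)]] y pw w by simp
  have yw2: "y\<cdot>iv w\<cdot>w\<cdot>y = y" using arg_cong[where f="\<lambda>t. t\<cdot>y", OF yw] iy y w pw by simp
  have yu2: "y\<cdot>iv u\<cdot>u\<cdot>y = y" using arg_cong[where f="\<lambda>t. t\<cdot>y", OF yu] iy y u by simp
  have "sg_rel (w\<cdot>y) (u\<cdot>y)" by (rule sig_mulR[OF sig_sym[OF w(2)] iy(1)]) (use pw iy y(2) in simp)
  moreover have "iv (w\<cdot>y) \<cdot> (w\<cdot>y) = iv (u\<cdot>y) \<cdot> (u\<cdot>y)" using iy y(2) w pw u yw2 yu2 iv_idem[OF y(1)] y(1) by simp
  ultimately have eq: "w\<cdot>y = u\<cdot>y" by (rule sig_inj)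
  have "ind_alpha S (P u) y = (w\<cdot>y)\<cdot>iv w" unfolding ind_alpha_def munn_theta_def w_def by simp
  also have "\<dots> = (w\<cdot>y)\<cdot>iv (w\<cdot>y)" using iy y(2) w pw iv_idem[OF y(1)] y(1) by simp
  also have "\<dots> = (u\<cdot>y)\<cdot>iv (u\<cdot>y)" using eq by simp
  also have "\<dots> = u\<cdot>y\<cdot>iv u" using iy y(2) u iv_idem[OF y(1)] y(1) by simp
  finally show ?thesis .
qed

end

context ES begin

abbreviation "T \<equiv> semidirect G (idem_sgpd S) (ind_D S) (ind_alpha S)"
abbreviation "phi \<equiv> (\<lambda>s. (P s, smul S (star S s) s))"

lemma T_sarr: "p \<in> sarr T \<longleftrightarrow> fst p \<in> P ` A \<and> snd p \<in> ind_D S (star G (fst p))"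
  by (cases p) (simp add: semidirect_def G_sarr)
lemma T_dom: "sdom T (g, y) = (sdom G g, dm y)"
  by (simp add: semidirect_def idem_sgpd_def)
lemma T_cod: "scod T (g, y) = (scod G g, cd (ind_alpha S g y))"
  by (simp add: semidirect_def idem_sgpd_def)
lemma T_mul: "smul T (g, x) (h, y) = (smul G g h, ind_alpha S (star G h) (x \<cdot> ind_alpha S h y))"
  by (simp add: semidirect_def idem_sgpd_def)

lemma ind_D_iff: "y \<in> ind_D S g \<longleftrightarrow> (\<exists>t\<in>g. y \<in> munn_X S t)"
  unfolding ind_D_def by blast

lemma phi_in: assumes s: "s\<in>A" shows "phi s \<in> sarr T"
proof -
  have "iv s\<cdot>s \<in> munn_X S (iv s)" unfolding munn_X_iff
    using sis_idem[OF s] le_refl[of "iv s\<cdot>s"] s by simp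
  thus ?thesis unfolding T_sarr using s G_star[OF s] pi_mem[of "iv s"] ind_D_iff by auto
qed

lemma alpha_self: assumes t: "t\<in>A" shows "ind_alpha S (P t) (iv t\<cdot>t) = t\<cdot>iv t"
proof -
  have "ind_alpha S (P t) (iv t\<cdot>t) = t\<cdot>(iv t\<cdot>t)\<cdot>iv t"
    by (rule alpha[OF t sis_idem[OF t]]) (use t in simp_all)
  thus ?thesis using t by simp
qed

lemma phi_dom: "s\<in>A \<Longrightarrow> sdom T (phi s) = (dm s, dm s)"
  by (simp add: T_dom G_dom)
lemma phi_cod: "s\<in>A \<Longrightarrow> scod T (phi s) = (cd s, cd s)"
  by (simp add: T_cod G_cod alpha_self)

lemma phi_mul: assumes s: "s\<in>A" and t: "t\<in>A" and st: "dm s = cd t"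
  shows "smul T (phi s) (phi t) = phi (s\<cdot>t)"
proof -
  have y: "(iv s\<cdot>s)\<cdot>(t\<cdot>iv t) \<in> E"
    by (rule idem_mul[OF sis_idem[OF s] ssi_idem[OF t]]) (use s t st in simp)
  have "ind_alpha S (P (iv t)) (iv s\<cdot>s\<cdot>t\<cdot>iv t) = iv t\<cdot>(iv s\<cdot>s\<cdot>t\<cdot>iv t)\<cdot>iv (iv t)"
    by (rule alpha) (use s t st y in simp_all)
  hence "ind_alpha S (P (iv t)) (iv s\<cdot>s\<cdot>t\<cdot>iv t) = iv t\<cdot>iv s\<cdot>s\<cdot>t"
    using s t st by simp
  thus ?thesis using s t st by (simp add: T_mul G_mul G_star alpha_self)
qed

lemma phi_inj: "inj_on phi A"
proof (rule inj_onI)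
  fix s t assume "s\<in>A" "t\<in>A" "phi s = phi t"
  thus "s = t" using pi_eq_iff sig_inj by auto
qed

lemma phi_surj: assumes p: "p \<in> sarr T" shows "\<exists>t\<in>A. p = phi t"
proof -
  obtain g y where gy: "p = (g, y)" by (cases p)
  obtain s where s: "s\<in>A" "g = P s" using p gy T_sarr by auto
  obtain u where u: "u \<in> P (iv s)" "y \<in> munn_X S u" using p gy s G_star[OF s(1)] T_sarr ind_D_iff by auto
  have u1: "u\<in>A" "sg_rel (iv s) u" using pi_memD[OF u(1)] by auto
  have y: "y\<in>E" "nleq S y (u\<cdot>iv u)" using u(2) munn_X_iff by auto
  have iy: "y\<in>A" "dm y = cd u" "cd y = cd u" using le_E[OF y(2)] u1 by auto
  have yy: "y\<cdot>u\<cdot>iv u = y" using le_idem_iff[OF y(1) ssi_idem[OF u1(1)]] y iy u1 by simp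
  have yy2: "y\<cdot>u\<cdot>iv u\<cdot>y = y" using arg_cong[where f="\<lambda>t. t\<cdot>y", OF yy] iy u1 idemD[OF y(1)] by simp
  define t where "t = iv u\<cdot>y"
  have tA: "t\<in>A" using iy u1 by (simp add: t_def)
  have "iv t\<cdot>t = y" using iy u1 yy2 iv_idem[OF y(1)] by (simp add: t_def)
  moreover have "sg_rel t (iv u)" unfolding t_def
    by (rule sig_le, rule le_mulI[OF _ y(1)]) (use iy u1 in simp_all)
  moreover have "sg_rel (iv u) s" using sig_iv[OF u1(2)] s(1) sig_sym by simp
  ultimately have "iv t\<cdot>t = y" "sg_rel s t" using sig_trans sig_sym by blast+
  hence "P t = P s" using pi_eq_iff tA s by (metis sig_sym)
  thus ?thesis using tA gy s \<open>iv t\<cdot>t = y\<close> by auto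
qed

lemma phi_bij: "bij_betw phi A (sarr T)"
  unfolding bij_betw_def
proof (intro conjI phi_inj equalityI subsetI)
  fix x assume "x \<in> phi ` A" thus "x \<in> sarr T" using phi_in by auto
next
  fix x assume "x \<in> sarr T" thus "x \<in> phi ` A" using phi_surj by blast
qed

lemma main: "sgpd_iso S T phi"
proof -
  have m1: "sgpd_morphism S T phi"
    unfolding sgpd_morphism_def
  proof (intro conjI allI impI ballI)
    fix s assume "s\<in>A" thus "phi s \<in> sarr T" by (rule phi_in)
  next
    fix s t assume c: "composable S s t"
    hence st: "s\<in>A" "t\<in>A" "dm s = cd t" unfolding composable_def by auto
    show "composable T (phi s) (phi t)" unfolding composable_def
      using phi_in[OF st(1)] phi_in[OF st(2)] phi_dom[OF st(1)] phi_cod[OF st(2)] st(3) by simp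
    show "phi (s\<cdot>t) = smul T (phi s) (phi t)" using phi_mul[OF st] by simp
  qed
  have m2: "sgpd_morphism T S (the_inv_into A phi)"
    unfolding sgpd_morphism_def
  proof (intro conjI allI impI ballI)
    fix p assume "p \<in> sarr T"
    thus "the_inv_into A phi p \<in> A" using the_inv_into_into[OF phi_inj, of p A] phi_bij unfolding bij_betw_def by simp
  next
    fix p q assume c: "composable T p q"
    have pq: "p \<in> sarr T" "q \<in> sarr T" using c unfolding composable_def by auto
    obtain s where s: "s\<in>A" "p = phi s" using phi_surj[OF pq(1)] by blast
    obtain t where t: "t\<in>A" "q = phi t" using phi_surj[OF pq(2)] by blast
    note st = s(1) t(1) s(2) t(2)
    have d: "dm s = cd t" using c st phi_dom phi_cod unfolding composable_def by auto
    have i1: "the_inv_into A phi p = s" "the_inv_into A phi q = t"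
      unfolding st(3,4) by (rule the_inv_into_f_f[OF phi_inj st(1)], rule the_inv_into_f_f[OF phi_inj st(2)])
    have "smul T p q = phi (s\<cdot>t)" using st d phi_mul by simp
    hence i2: "the_inv_into A phi (smul T p q) = s\<cdot>t"
      using the_inv_into_f_f[OF phi_inj, of "s\<cdot>t"] st d by simp
    show "composable S (the_inv_into A phi p) (the_inv_into A phi q)"
      using i1 st d unfolding composable_def by simp
    show "the_inv_into A phi (smul T p q) = smul S (the_inv_into A phi p) (the_inv_into A phi q)"
      using i1 i2 by simp
  qed
  show ?thesis unfolding sgpd_iso_def using m1 m2 phi_bij by blast
qed


end

theorem mainTheorem14:
  fixes S :: "('a, 'o) sgpd"
  assumes "inverse_semigroupoid S"
    and "E_unitary S"
  shows "sgpd_iso S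
           (semidirect (sigma_quot S) (idem_sgpd S) (ind_D S) (ind_alpha S))
           (\<lambda>s. (pi_sigma S s, smul S (star S s) s))"
proof -
  interpret ES S using assms by unfold_locales
  show ?thesis by (rule main)
qed

end
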